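(* Let $A_1,\dots,A_N$ be symmetric $N\times N$ matrices over $\mathbb{F}_2$ with $(A_i)_{k,k}=\delta_{ik}$ for all $i,k$, let $A(z)=\sum_{i=1}^Nz(i)A_i$ for $z\in\mathbb{F}_2^N$, and let $C$ be any fixed symmetric $N\times N$ matrix over $\mathbb{F}_2$. Then for every integer $1\le k\le N$, with $z$ uniform in $\mathbb{F}_2^N$, $$\Pr_z\big\{\operatorname{rank}(A(z)+C)\le k-1\big\}\le\frac1{2^N}\sum_{i=0}^{k-1}\binom{N}{i}.$$ *)

theory Defs
  imports "Jordan_Normal_Form.DL_Rank" "HOL-Library.Z2"
begin

definition Amat :: "nat \<Rightarrow> (nat \<Rightarrow> bit mat) \<Rightarrow> bit vec \<Rightarrow> bit mat" where
  "Amat N A z = mat N N (\<lambda>(r, c). \<Sum>i<N. z $ i * A i $$ (r, c))"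

end

theory Submission
  imports Defs "Jordan_Normal_Form.DL_Rank_Submatrix" "HOL-Library.FuncSet"
begin

declare add_bit_eq_xor[simp del] mult_bit_eq_and[simp del]

lemma bit_add_self[simp]: "(x::bit) + x = 0" by (cases x) auto
lemma bit_mult_self[simp]: "(x::bit) * x = x" by (cases x) auto

definition bmon :: "nat set \<Rightarrow> bit vec \<Rightarrow> bit" where
  "bmon T z = (\<Prod>i\<in>T. z $ i)"

definition Sm :: "nat \<Rightarrow> nat \<Rightarrow> nat set set" where
  "Sm N d = {T. T \<subseteq> {..<N} \<and> card T \<le> d}"

definition deg :: "nat \<Rightarrow> nat \<Rightarrow> (bit vec \<Rightarrow> bit) \<Rightarrow> bool" where
  "deg N d f \<longleftrightarrow> (\<exists>c. \<forall>z\<in>carrier_vec N. f z = (\<Sum>T\<in>Sm N d. c T * bmon T z))"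

lemma finite_Sm[simp]: "finite (Sm N d)"
  unfolding Sm_def by (rule finite_subset[of _ "Pow {..<N}"]) auto

lemma empty_Sm[simp]: "{} \<in> Sm N d" unfolding Sm_def by auto

lemma deg_cong: "deg N d f \<Longrightarrow> (\<And>z. z \<in> carrier_vec N \<Longrightarrow> f z = g z) \<Longrightarrow> deg N d g"
  unfolding deg_def by metis

lemma deg_const: "deg N d (\<lambda>z. c)"
  unfolding deg_def
proof (intro exI ballI)
  fix z :: "bit vec"
  have "(\<Sum>T\<in>Sm N d. (if T = {} then c else 0) * bmon T z) = (\<Sum>T\<in>Sm N d. (if T = {} then c * bmon T z else 0))"
    by (rule sum.cong) auto
  also have "\<dots> = c" by (simp add: bmon_def)
  finally show "c = (\<Sum>T\<in>Sm N d. (if T = {} then c else 0) * bmon T z)" by simp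
qed

lemma deg_add: "deg N d f \<Longrightarrow> deg N d g \<Longrightarrow> deg N d (\<lambda>z. f z + g z)"
  unfolding deg_def
proof -
  assume "\<exists>c. \<forall>z\<in>carrier_vec N. f z = (\<Sum>T\<in>Sm N d. c T * bmon T z)"
     and "\<exists>c. \<forall>z\<in>carrier_vec N. g z = (\<Sum>T\<in>Sm N d. c T * bmon T z)"
  then obtain c c' where c: "\<forall>z\<in>carrier_vec N. f z = (\<Sum>T\<in>Sm N d. c T * bmon T z)"
     and c': "\<forall>z\<in>carrier_vec N. g z = (\<Sum>T\<in>Sm N d. c' T * bmon T z)" by blast
  show "\<exists>c. \<forall>z\<in>carrier_vec N. f z + g z = (\<Sum>T\<in>Sm N d. c T * bmon T z)"
    by (rule exI[of _ "\<lambda>T. c T + c' T"]) (simp add: c c' distrib_right sum.distrib)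
qed

lemma deg_scale: "deg N d f \<Longrightarrow> deg N d (\<lambda>z. a * f z)"
  unfolding deg_def
proof -
  assume "\<exists>c. \<forall>z\<in>carrier_vec N. f z = (\<Sum>T\<in>Sm N d. c T * bmon T z)"
  then obtain c where c: "\<forall>z\<in>carrier_vec N. f z = (\<Sum>T\<in>Sm N d. c T * bmon T z)" by blast
  show "\<exists>c. \<forall>z\<in>carrier_vec N. a * f z = (\<Sum>T\<in>Sm N d. c T * bmon T z)"
    by (rule exI[of _ "\<lambda>T. a * c T"]) (simp add: c sum_distrib_left mult.assoc)
qed

lemma deg_mono: "deg N d f \<Longrightarrow> d \<le> d' \<Longrightarrow> deg N d' f"
  unfolding deg_def
proof -
  assume "\<exists>c. \<forall>z\<in>carrier_vec N. f z = (\<Sum>T\<in>Sm N d. c T * bmon T z)" "d \<le> d'"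
  then obtain c where c: "\<forall>z\<in>carrier_vec N. f z = (\<Sum>T\<in>Sm N d. c T * bmon T z)" by blast
  have sub: "Sm N d \<subseteq> Sm N d'" using \<open>d \<le> d'\<close> unfolding Sm_def by auto
  show "\<exists>c. \<forall>z\<in>carrier_vec N. f z = (\<Sum>T\<in>Sm N d'. c T * bmon T z)"
  proof (rule exI[of _ "\<lambda>T. if T \<in> Sm N d then c T else 0"], intro ballI)
    fix z :: "bit vec" assume z: "z \<in> carrier_vec N"
    have "(\<Sum>T\<in>Sm N d'. (if T \<in> Sm N d then c T else 0) * bmon T z) = (\<Sum>T\<in>Sm N d. (if T \<in> Sm N d then c T else 0) * bmon T z)"
      by (rule sum.mono_neutral_right[OF finite_Sm sub]) auto
    also have "\<dots> = (\<Sum>T\<in>Sm N d. c T * bmon T z)" by (rule sum.cong) auto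
    finally show "f z = (\<Sum>T\<in>Sm N d'. (if T \<in> Sm N d then c T else 0) * bmon T z)" using c z by simp
  qed
qed

lemma deg_sum: "finite I \<Longrightarrow> (\<And>i. i \<in> I \<Longrightarrow> deg N d (f i)) \<Longrightarrow> deg N d (\<lambda>z. \<Sum>i\<in>I. f i z)"
proof (induction I rule: finite_induct)
  case empty
  then show ?case using deg_const[of N d 0] by simp
next
  case (insert x F)
  then show ?case using deg_add[of N d "f x" "\<lambda>z. \<Sum>i\<in>F. f i z"] by simp
qed

lemma mon_insert: "z $ i * bmon T z = bmon (insert i T) z" if "finite T" for z :: "bit vec"
proof (cases "i \<in> T")
  case True
  have e: "bmon T z = z $ i * bmon (T - {i}) z" unfolding bmon_def
    by (rule prod.remove[OF that True])
  have "z $ i * bmon T z = (z $ i * z $ i) * bmon (T - {i}) z"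
    unfolding e by (rule mult.assoc[symmetric])
  also have "\<dots> = bmon T z" unfolding e bit_mult_self ..
  also have "\<dots> = bmon (insert i T) z" using True by (simp add: insert_absorb)
  finally show ?thesis .
next
  case False
  then show ?thesis unfolding bmon_def using that by simp
qed

lemma deg_mul_var: "deg N d f \<Longrightarrow> i < N \<Longrightarrow> deg N (Suc d) (\<lambda>z. z $ i * f z)"
  unfolding deg_def
proof -
  assume "\<exists>c. \<forall>z\<in>carrier_vec N. f z = (\<Sum>T\<in>Sm N d. c T * bmon T z)" "i < N"
  then obtain c where c: "\<forall>z\<in>carrier_vec N. f z = (\<Sum>T\<in>Sm N d. c T * bmon T z)" by blast
  have img: "insert i ` Sm N d \<subseteq> Sm N (Suc d)" unfolding Sm_def
  proof (rule image_subsetI)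
    fix T assume "T \<in> {T. T \<subseteq> {..<N} \<and> card T \<le> d}"
    then have T: "T \<subseteq> {..<N}" "card T \<le> d" by auto
    then have "finite T" using finite_subset by blast
    then show "insert i T \<in> {T. T \<subseteq> {..<N} \<and> card T \<le> Suc d}"
      using T \<open>i < N\<close> by (simp add: card_insert_if)
  qed
  show "\<exists>c. \<forall>z\<in>carrier_vec N. z $ i * f z = (\<Sum>T\<in>Sm N (Suc d). c T * bmon T z)"
  proof (rule exI[of _ "\<lambda>W. \<Sum>T\<in>{T\<in>Sm N d. insert i T = W}. c T"], intro ballI)
    fix z :: "bit vec" assume z: "z \<in> carrier_vec N"
    have "z $ i * f z = (\<Sum>T\<in>Sm N d. z $ i * (c T * bmon T z))"
      using c z by (simp add: sum_distrib_left)
    also have "\<dots> = (\<Sum>T\<in>Sm N d. c T * bmon (insert i T) z)"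
    proof (rule sum.cong[OF refl])
      fix T assume "T \<in> Sm N d"
      then have "finite T" unfolding Sm_def using finite_subset by blast
      then show "z $ i * (c T * bmon T z) = c T * bmon (insert i T) z"
        using mon_insert[of T z i] by (simp add: mult.left_commute)
    qed
    also have "\<dots> = (\<Sum>W\<in>Sm N (Suc d). \<Sum>T\<in>{T\<in>Sm N d. insert i T = W}. c T * bmon (insert i T) z)"
      by (rule sum.group[symmetric, OF finite_Sm finite_Sm img])
    also have "\<dots> = (\<Sum>W\<in>Sm N (Suc d). (\<Sum>T\<in>{T\<in>Sm N d. insert i T = W}. c T) * bmon W z)"
      by (simp add: sum_distrib_right)
    finally show "z $ i * f z = (\<Sum>W\<in>Sm N (Suc d). (\<Sum>T\<in>{T\<in>Sm N d. insert i T = W}. c T) * bmon W z)" .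
  qed
qed

lemma deg_mon_mul: "T \<subseteq> {..<N} \<Longrightarrow> deg N b g \<Longrightarrow> deg N (card T + b) (\<lambda>z. bmon T z * g z)"
proof -
  assume T: "T \<subseteq> {..<N}" and g: "deg N b g"
  have "finite T" using T finite_subset by blast
  then show ?thesis using T
  proof (induction T rule: finite_induct)
    case empty
    then show ?case using g by (simp add: bmon_def)
  next
    case (insert x F)
    then have "deg N (Suc (card F + b)) (\<lambda>z. z $ x * (bmon F z * g z))"
      by (intro deg_mul_var) auto
    moreover have "card (insert x F) + b = Suc (card F + b)" using insert by simp
    moreover have "z $ x * (bmon F z * g z) = bmon (insert x F) z * g z" for z
      using mon_insert[OF insert(1), of z x] by (metis mult.assoc)
    ultimately show ?case by simp
  qed
qed

lemma deg_mul: "deg N a f \<Longrightarrow> deg N b g \<Longrightarrow> deg N (a + b) (\<lambda>z. f z * g z)"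
proof -
  assume f: "deg N a f" and g: "deg N b g"
  then obtain c where c: "\<forall>z\<in>carrier_vec N. f z = (\<Sum>T\<in>Sm N a. c T * bmon T z)" unfolding deg_def by blast
  have "deg N (a + b) (\<lambda>z. \<Sum>T\<in>Sm N a. c T * (bmon T z * g z))"
  proof (rule deg_sum[OF finite_Sm])
    fix T assume "T \<in> Sm N a"
    then have "T \<subseteq> {..<N}" "card T \<le> a" unfolding Sm_def by auto
    then show "deg N (a + b) (\<lambda>z. c T * (bmon T z * g z))"
      using deg_mon_mul[OF _ g] deg_scale deg_mono by (metis add_le_mono1)
  qed
  then show ?thesis
    by (rule deg_cong) (simp add: c sum_distrib_right mult.assoc)
qed

lemma deg_prod: "finite I \<Longrightarrow> (\<And>i. i \<in> I \<Longrightarrow> deg N (a i) (f i)) \<Longrightarrow> deg N (\<Sum>i\<in>I. a i) (\<lambda>z. \<Prod>i\<in>I. f i z)"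
proof (induction I rule: finite_induct)
  case empty
  then show ?case using deg_const[of N 0 1] by simp
next
  case (insert x F)
  then show ?case using deg_mul[of N "a x" "f x" "\<Sum>i\<in>F. a i" "\<lambda>z. \<Prod>i\<in>F. f i z"] by simp
qed

lemma deg_var: "i < N \<Longrightarrow> deg N 1 (\<lambda>z. z $ i)"
  using deg_mul_var[OF deg_const[of N 0 1]] by simp

lemma deg_mon: "T \<subseteq> {..<N} \<Longrightarrow> deg N (card T) (bmon T)"
  using deg_mon_mul[OF _ deg_const[of N 0 1]] by simp

lemma signof_bit[simp]: "(of_int (sign p) :: bit) = 1"
  by (simp add: sign_def)

lemma bit_cancel: "(a::bit) + e + a = e"
  by (cases a; cases e) simp_all

lemma bit_ident: "((xa::bit) + ea) * P + xa * Q = xa * (P + Q) + ea * (P + Q) + ea * Q"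
  by (cases xa; cases ea; cases P; cases Q) simp_all

lemma inv_pair_zero:
  fixes f :: "'a \<Rightarrow> bit"
  assumes "finite X" "\<And>x. x \<in> X \<Longrightarrow> g x \<in> X" "\<And>x. x \<in> X \<Longrightarrow> g (g x) = x"
    "\<And>x. x \<in> X \<Longrightarrow> g x \<noteq> x" "\<And>x. x \<in> X \<Longrightarrow> f (g x) = f x"
  shows "(\<Sum>x\<in>X. f x) = 0"
  using assms
proof (induction "card X" arbitrary: X rule: less_induct)
  case less
  show ?case
  proof (cases "X = {}")
    case True then show ?thesis by simp
  next
    case False
    then obtain x where x: "x \<in> X" by blast
    define Y where "Y = X - {x, g x}"
    have sub: "{x, g x} \<subseteq> X" using x less.prems by auto
    have "(\<Sum>x\<in>X. f x) = (\<Sum>x\<in>Y. f x) + (\<Sum>x\<in>{x, g x}. f x)"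
      unfolding Y_def by (rule sum.subset_diff[OF sub less.prems(1)])
    also have "(\<Sum>x\<in>{x, g x}. f x) = f x + f (g x)"
      using less.prems(4)[OF x] by simp
    also have "\<dots> = 0" using less.prems(5)[OF x] by simp
    also have "(\<Sum>x\<in>Y. f x) = 0"
    proof (rule less.hyps)
      show "card Y < card X"
        by (rule psubset_card_mono[OF less.prems(1)]) (use x in \<open>auto simp: Y_def\<close>)
      show "finite Y" unfolding Y_def using less.prems(1) by simp
      fix y assume y: "y \<in> Y"
      then have yX: "y \<in> X" "y \<noteq> x" "y \<noteq> g x" unfolding Y_def by auto
      show "g y \<in> Y" unfolding Y_def using yX less.prems(2,3)[OF yX(1)] less.prems(3)[OF x] by auto
      show "g (g y) = y" using less.prems(3) yX by blast
      show "g y \<noteq> y" using less.prems(4) yX by blast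
      show "f (g y) = f y" using less.prems(5) yX by blast
    qed
    finally show ?thesis by simp
  qed
qed

lemma deg_id_term:
  assumes "finite I" "I \<noteq> {}" "\<And>i. i \<in> I \<Longrightarrow> deg N 1 (x i)"
  shows "deg N (card I - 1) (\<lambda>z. (\<Prod>i\<in>I. x i z + e i) + (\<Prod>i\<in>I. x i z))"
  using assms
proof (induction I rule: finite_ne_induct)
  case (singleton a)
  then show ?case using deg_const[of N 0 "e a"] by (simp add: bit_cancel)
next
  case (insert a I)
  let ?P = "\<lambda>z. \<Prod>i\<in>I. x i z + e i" and ?Q = "\<lambda>z. \<Prod>i\<in>I. x i z"
  have R: "deg N (card I - 1) (\<lambda>z. ?P z + ?Q z)" using insert by simp
  have ci: "card I \<ge> 1" using insert by (simp add: Suc_leI card_gt_0_iff)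
  have Q: "deg N (card I) ?Q"
    using deg_prod[OF insert(1), of N "\<lambda>_. 1" x] insert.prems by simp
  have xa: "deg N 1 (x a)" using insert.prems by simp
  have d1: "deg N (card I) (\<lambda>z. x a z * (?P z + ?Q z))"
    using deg_mul[OF xa R] ci by simp
  have d2: "deg N (card I) (\<lambda>z. e a * (?P z + ?Q z))"
    using deg_mono[OF deg_scale[OF R]] by simp
  have d3: "deg N (card I) (\<lambda>z. e a * ?Q z)" using deg_scale[OF Q] .
  have "deg N (card I) (\<lambda>z. x a z * (?P z + ?Q z) + e a * (?P z + ?Q z) + e a * ?Q z)"
    by (intro deg_add d1 d2 d3)
  then have "deg N (card I) (\<lambda>z. (\<Prod>i\<in>insert a I. x i z + e i) + (\<Prod>i\<in>insert a I. x i z))"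
    by (rule deg_cong) (simp add: insert(1,3) bit_ident)
  then show ?case using insert(1,3) by simp
qed

lemma deg_inv_term:
  assumes p: "p permutes {0..<n}" and pp: "p \<circ> p = id" and pid: "p \<noteq> id"
    and sym: "\<And>z i j. z \<in> carrier_vec N \<Longrightarrow> i < n \<Longrightarrow> j < n \<Longrightarrow> b z i j = b z j i"
    and d1: "\<And>i j. i < n \<Longrightarrow> j < n \<Longrightarrow> deg N 1 (\<lambda>z. b z i j)"
  shows "deg N (n - 1) (\<lambda>z. \<Prod>i\<in>{0..<n}. b z i (p i))"
proof -
  have ppi: "p (p i) = i" for i using pp by (metis comp_apply id_apply)
  have pin: "i < n \<Longrightarrow> p i < n" for i using permutes_in_image[OF p] by simp
  define F where "F = {i\<in>{0..<n}. p i = i}"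
  define R where "R = {i\<in>{0..<n}. i < p i}"
  define R2 where "R2 = {i\<in>{0..<n}. p i < i}"
  have un: "{0..<n} = F \<union> (R \<union> R2)" unfolding F_def R_def R2_def by auto
  have fin: "finite F" "finite R" "finite R2" unfolding F_def R_def R2_def by auto
  have R2img: "R2 = p ` R"
  proof
    show "R2 \<subseteq> p ` R"
    proof
      fix i assume "i \<in> R2"
      then have "i < n" "p i < i" unfolding R2_def by auto
      then have "p i \<in> R" unfolding R_def using ppi pin by auto
      then show "i \<in> p ` R" using ppi[of i] by (metis image_eqI)
    qed
    show "p ` R \<subseteq> R2" unfolding R_def R2_def using ppi pin by auto
  qed
  have injR: "inj_on p R" using permutes_inj[OF p] by (simp add: inj_on_def inj_def)
  have cR2: "card R2 = card R" unfolding R2img using card_image[OF injR] .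
  have Rne: "R \<noteq> {}"
  proof
    assume R0: "R = {}"
    from pid obtain i where i: "p i \<noteq> i" by (metis eq_id_iff)
    then have "i < n" using permutes_not_in[OF p] by fastforce
    show False
    proof (cases "i < p i")
      case True then show False using R0 \<open>i < n\<close> unfolding R_def by auto
    next
      case False
      then have "p i < p (p i)" using i ppi by simp
      then show False using R0 pin[OF \<open>i < n\<close>] unfolding R_def by auto
    qed
  qed
  have ncard: "n = card F + card R + card R2"
  proof -
    have "n = card {0..<n}" by simp
    also have "\<dots> = card F + card (R \<union> R2)" unfolding un
      by (rule card_Un_disjoint) (use fin in \<open>auto simp: F_def R_def R2_def\<close>)
    also have "card (R \<union> R2) = card R + card R2"
      by (rule card_Un_disjoint) (use fin in \<open>auto simp: R_def R2_def\<close>)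
    finally show ?thesis by simp
  qed
  have cRpos: "card R \<ge> 1" using Rne fin by (simp add: Suc_leI card_gt_0_iff)
  have eq: "(\<Prod>i\<in>{0..<n}. b z i (p i)) = (\<Prod>i\<in>F. b z i i) * (\<Prod>i\<in>R. b z i (p i))"
    if z: "z \<in> carrier_vec N" for z
  proof -
    have "(\<Prod>i\<in>{0..<n}. b z i (p i)) = (\<Prod>i\<in>F. b z i (p i)) * ((\<Prod>i\<in>R. b z i (p i)) * (\<Prod>i\<in>R2. b z i (p i)))"
    proof -
      have d1: "F \<inter> (R \<union> R2) = {}" "R \<inter> R2 = {}" unfolding F_def R_def R2_def by auto
      show ?thesis unfolding un prod.union_disjoint[OF fin(1) finite_UnI[OF fin(2,3)] d1(1)]
          prod.union_disjoint[OF fin(2,3) d1(2)] by (rule refl)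
    qed
    also have "(\<Prod>i\<in>F. b z i (p i)) = (\<Prod>i\<in>F. b z i i)"
      by (rule prod.cong) (auto simp: F_def)
    also have "(\<Prod>i\<in>R2. b z i (p i)) = (\<Prod>i\<in>R. b z (p i) (p (p i)))"
      unfolding R2img by (subst prod.reindex[OF injR]) simp
    also have "\<dots> = (\<Prod>i\<in>R. b z i (p i))"
      by (rule prod.cong) (auto simp: ppi R_def pin sym[OF z])
    finally show ?thesis by simp
  qed
  have "deg N (card F + card R) (\<lambda>z. (\<Prod>i\<in>F. b z i i) * (\<Prod>i\<in>R. b z i (p i)))"
  proof (rule deg_mul)
    show "deg N (card F) (\<lambda>z. \<Prod>i\<in>F. b z i i)"
      using deg_prod[OF fin(1), of N "\<lambda>_. 1" "\<lambda>i z. b z i i"] d1 by (simp add: F_def)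
    show "deg N (card R) (\<lambda>z. \<Prod>i\<in>R. b z i (p i))"
      using deg_prod[OF fin(2), of N "\<lambda>_. 1" "\<lambda>i z. b z i (p i)"] d1 pin by (simp add: R_def)
  qed
  then have "deg N (n - 1) (\<lambda>z. (\<Prod>i\<in>F. b z i i) * (\<Prod>i\<in>R. b z i (p i)))"
    by (rule deg_mono) (use ncard cR2 cRpos in simp)
  then show ?thesis by (rule deg_cong) (simp add: eq)
qed

lemma deg_det_perm:
  assumes n: "n \<ge> 1"
    and sym: "\<And>z i j. z \<in> carrier_vec N \<Longrightarrow> i < n \<Longrightarrow> j < n \<Longrightarrow> b z i j = b z j i"
    and d1: "\<And>i j. i < n \<Longrightarrow> j < n \<Longrightarrow> deg N 1 (\<lambda>z. b z i j)"
    and sig: "\<And>i. i < n \<Longrightarrow> \<sigma> i < N"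
    and diag: "\<And>z i. z \<in> carrier_vec N \<Longrightarrow> i < n \<Longrightarrow> b z i i = z $ \<sigma> i + e i"
  shows "deg N (n - 1) (\<lambda>z. (\<Sum>p\<in>{p. p permutes {0..<n}}. of_int (sign p) * (\<Prod>i = 0..<n. b z i (p i)))
           + (\<Prod>i = 0..<n. z $ \<sigma> i))"
proof -
  define P where "P = {p. p permutes {0..<n}}"
  define Inv where "Inv = {p\<in>P. p \<noteq> id \<and> p \<circ> p = id}"
  define Non where "Non = {p\<in>P. p \<circ> p \<noteq> id}"
  let ?t = "\<lambda>p z. \<Prod>i = 0..<n. b z i (p i)"
  have finP: "finite P" unfolding P_def by (rule finite_permutations) simp
  have idP: "id \<in> P" unfolding P_def by simp
  have Pun: "P = insert id (Inv \<union> Non)" unfolding Inv_def Non_def using idP by auto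
  have fins: "finite Inv" "finite Non" using finP unfolding Inv_def Non_def by auto
  have disj: "id \<notin> Inv \<union> Non" "Inv \<inter> Non = {}" unfolding Inv_def Non_def by auto
  have Non0: "(\<Sum>p\<in>Non. ?t p z) = 0" if z: "z \<in> carrier_vec N" for z
  proof (rule inv_pair_zero[where g = "\<lambda>q. inv_into UNIV q"])
    show "finite Non" by (rule fins)
    fix p assume "p \<in> Non"
    then have p: "p permutes {0..<n}" and pp: "p \<circ> p \<noteq> id" unfolding Non_def P_def by auto
    have ip: "inv_into UNIV p permutes {0..<n}" using permutes_inv[OF p] .
    have iip: "inv_into UNIV (inv_into UNIV p) = p" using permutes_inv_inv[OF p] .
    have ipp: "inv_into UNIV p \<circ> inv_into UNIV p \<noteq> id"
    proof
      assume "inv_into UNIV p \<circ> inv_into UNIV p = id"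
      then have "p \<circ> (inv_into UNIV p \<circ> inv_into UNIV p) \<circ> p = p \<circ> p" by simp
      then show False using pp permutes_inv_o[OF p]
        by (metis comp_id fun.map_comp id_comp)
    qed
    show "inv_into UNIV p \<in> Non" unfolding Non_def P_def using ip ipp by simp
    show "inv_into UNIV (inv_into UNIV p) = p" by (rule iip)
    show "inv_into UNIV p \<noteq> p"
    proof
      assume "inv_into UNIV p = p"
      then show False using pp permutes_inv_o(1)[OF p] by simp
    qed
    have "?t (inv_into UNIV p) z = (\<Prod>i = 0..<n. b z (p i) (inv_into UNIV p (p i)))"
      by (subst prod.permute[OF p]) (simp add: comp_def)
    also have "\<dots> = ?t p z"
    proof (rule prod.cong[OF refl])
      fix i assume "i \<in> {0..<n}"
      then have "i < n" "p i < n" using permutes_in_image[OF p] by auto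
      then show "b z (p i) (inv_into UNIV p (p i)) = b z i (p i)"
        using sym[OF z] permutes_inverses(2)[OF p] by simp
    qed
    finally show "?t (inv_into UNIV p) z = ?t p z" .
  qed
  have split: "(\<Sum>p\<in>P. of_int (sign p) * ?t p z) = ?t id z + (\<Sum>p\<in>Inv. ?t p z) + (\<Sum>p\<in>Non. ?t p z)" for z
    unfolding Pun using fins disj by (simp add: sum.union_disjoint add.assoc)
  have dInv: "deg N (n - 1) (\<lambda>z. \<Sum>p\<in>Inv. ?t p z)"
  proof (rule deg_sum[OF fins(1)])
    fix p assume "p \<in> Inv"
    then have "p permutes {0..<n}" "p \<circ> p = id" "p \<noteq> id" unfolding Inv_def P_def by auto
    then show "deg N (n - 1) (?t p)" using deg_inv_term[where b=b and N=N and n=n, OF _ _ _ sym d1] by blast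
  qed
  have dId: "deg N (card {0..<n} - 1) (\<lambda>z. (\<Prod>i\<in>{0..<n}. z $ \<sigma> i + e i) + (\<Prod>i\<in>{0..<n}. z $ \<sigma> i))"
    by (rule deg_id_term) (use n sig deg_var in auto)
  have dId': "deg N (n - 1) (\<lambda>z. ?t id z + (\<Prod>i = 0..<n. z $ \<sigma> i))"
  proof -
    have "deg N (n - 1) (\<lambda>z. (\<Prod>i\<in>{0..<n}. z $ \<sigma> i + e i) + (\<Prod>i\<in>{0..<n}. z $ \<sigma> i))"
      using dId by simp
    then show ?thesis
    proof (rule deg_cong)
      fix z :: "bit vec" assume z: "z \<in> carrier_vec N"
      have "(\<Prod>i\<in>{0..<n}. z $ \<sigma> i + e i) = ?t id z"
        by (rule prod.cong[OF refl]) (simp add: diag[OF z])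
      then show "(\<Prod>i\<in>{0..<n}. z $ \<sigma> i + e i) + (\<Prod>i\<in>{0..<n}. z $ \<sigma> i) =
        ?t id z + (\<Prod>i = 0..<n. z $ \<sigma> i)" by simp
    qed
  qed
  have "deg N (n - 1) (\<lambda>z. (?t id z + (\<Prod>i = 0..<n. z $ \<sigma> i)) + (\<Sum>p\<in>Inv. ?t p z))"
    by (rule deg_add[OF dId' dInv])
  then show ?thesis unfolding P_def[symmetric]
  proof (rule deg_cong)
    fix z :: "bit vec" assume z: "z \<in> carrier_vec N"
    show "?t id z + (\<Prod>i = 0..<n. z $ \<sigma> i) + (\<Sum>p\<in>Inv. ?t p z) =
      (\<Sum>p\<in>P. of_int (sign p) * ?t p z) + (\<Prod>i = 0..<n. z $ \<sigma> i)"
      unfolding split Non0[OF z] by (simp add: add_ac)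
  qed
qed

lemma Amat_carrier: "Amat N A z \<in> carrier_mat N N"
  unfolding Amat_def by simp

lemma Amat_index: "r < N \<Longrightarrow> c < N \<Longrightarrow> Amat N A z $$ (r, c) = (\<Sum>i<N. z $ i * A i $$ (r, c))"
  unfolding Amat_def by simp

lemma delta_prod:
  assumes z: "z \<in> carrier_vec N" and w: "w \<in> carrier_vec N"
  shows "(\<Prod>i<N. z $ i + w $ i + 1) = (if z = w then 1 else (0::bit))"
proof (cases "z = w")
  case True then show ?thesis by simp
next
  case False
  then obtain i where i: "i < N" "z $ i \<noteq> w $ i" using z w by (metis carrier_vecD eq_vecI)
  then have "z $ i + w $ i + 1 = 0" by (cases "z $ i"; cases "w $ i") simp_all
  then have "(\<Prod>i<N. z $ i + w $ i + 1) = 0" using i by (metis finite_lessThan lessThan_iff prod_zero)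
  then show ?thesis using False by simp
qed

lemma deg_all:
  assumes S: "finite S" "S \<subseteq> carrier_vec N"
  shows "\<exists>f. deg N N f \<and> (\<forall>z\<in>S. g z = f z)"
proof -
  define f where "f z = (\<Sum>w\<in>S. g w * (\<Prod>i<N. z $ i + w $ i + 1))" for z
  have "deg N N f" unfolding f_def
  proof (intro deg_sum[OF S(1)] deg_scale)
    fix w
    have "deg N (\<Sum>i<N. 1) (\<lambda>z. \<Prod>i<N. z $ i + w $ i + 1)"
    proof (rule deg_prod)
      fix i assume "i \<in> {..<N}"
      then have "deg N 1 (\<lambda>z. z $ i + (w $ i + 1))"
        by (intro deg_add deg_var) (auto intro: deg_const)
      then show "deg N 1 (\<lambda>z. z $ i + w $ i + 1)" by (simp add: add.assoc)
    qed simp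
    then show "deg N N (\<lambda>z. \<Prod>i<N. z $ i + w $ i + 1)" by simp
  qed
  moreover have "\<forall>z\<in>S. g z = f z"
  proof
    fix z assume z: "z \<in> S"
    have "f z = (\<Sum>w\<in>S. g w * (if z = w then 1 else 0))" unfolding f_def
      by (rule sum.cong[OF refl]) (use z S in \<open>simp add: delta_prod subsetD\<close>)
    also have "\<dots> = (\<Sum>w\<in>S. if z = w then g w else 0)"
      by (rule sum.cong[OF refl]) simp
    also have "\<dots> = g z" using z S by (simp add: sum.delta)
    finally show "g z = f z" by simp
  qed
  ultimately show ?thesis by blast
qed

lemma reduce:
  assumes k: "k \<ge> 1" and Sc: "S \<subseteq> carrier_vec N"
    and red: "\<And>U. U \<subseteq> {..<N} \<Longrightarrow> card U \<ge> k \<Longrightarrow> \<exists>h. deg N (card U - 1) h \<and> (\<forall>z\<in>S. bmon U z = h z)"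
  shows "deg N d f \<Longrightarrow> \<exists>g. deg N (k - 1) g \<and> (\<forall>z\<in>S. f z = g z)"
proof (induction d arbitrary: f)
  case 0
  then show ?case using deg_mono by blast
next
  case (Suc d)
  show ?case
  proof (cases "Suc d \<le> k - 1")
    case True then show ?thesis using Suc.prems deg_mono by blast
  next
    case False
    then have dk: "Suc d \<ge> k" by simp
    obtain c where c: "\<forall>z\<in>carrier_vec N. f z = (\<Sum>T\<in>Sm N (Suc d). c T * bmon T z)"
      using Suc.prems unfolding deg_def by blast
    define E where "E = {T \<in> Sm N (Suc d). card T = Suc d}"
    have un: "Sm N (Suc d) = Sm N d \<union> E" unfolding E_def Sm_def by auto
    have dj: "Sm N d \<inter> E = {}" unfolding E_def Sm_def by auto
    have finE: "finite E" unfolding E_def by simp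
    have "\<forall>T\<in>E. \<exists>h. deg N d h \<and> (\<forall>z\<in>S. bmon T z = h z)"
    proof
      fix T assume "T \<in> E"
      then have "T \<subseteq> {..<N}" "card T = Suc d" unfolding E_def Sm_def by auto
      then show "\<exists>h. deg N d h \<and> (\<forall>z\<in>S. bmon T z = h z)" using red[of T] dk by auto
    qed
    then obtain H where H: "\<And>T. T \<in> E \<Longrightarrow> deg N d (H T) \<and> (\<forall>z\<in>S. bmon T z = H T z)"
      by metis
    define f' where "f' z = (\<Sum>T\<in>Sm N d. c T * bmon T z) + (\<Sum>T\<in>E. c T * H T z)" for z
    have "deg N d f'" unfolding f'_def
    proof (rule deg_add)
      show "deg N d (\<lambda>z. \<Sum>T\<in>Sm N d. c T * bmon T z)" unfolding deg_def by blast
      show "deg N d (\<lambda>z. \<Sum>T\<in>E. c T * H T z)"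
        by (intro deg_sum[OF finE] deg_scale) (use H in blast)
    qed
    then obtain g where g: "deg N (k - 1) g" "\<forall>z\<in>S. f' z = g z" using Suc.IH by blast
    have "\<forall>z\<in>S. f z = g z"
    proof
      fix z assume z: "z \<in> S"
      have zc: "z \<in> carrier_vec N" using z Sc by blast
      have "f z = (\<Sum>T\<in>Sm N d. c T * bmon T z) + (\<Sum>T\<in>E. c T * bmon T z)"
        using c zc unfolding un by (simp add: sum.union_disjoint[OF finite_Sm finE dj])
      also have "(\<Sum>T\<in>E. c T * bmon T z) = (\<Sum>T\<in>E. c T * H T z)"
        by (rule sum.cong[OF refl]) (use H z in auto)
      finally show "f z = g z" using g(2) z unfolding f'_def by simp
    qed
    then show ?thesis using g by blast
  qed
qed

lemma card_bit_UNIV: "card (UNIV :: bit set) = 2"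
proof -
  have "(UNIV :: bit set) = {0, 1}" by (auto intro: bit.exhaust)
  moreover have "card {0::bit, 1} = 2" by simp
  ultimately show ?thesis by metis
qed

lemma bit_mult_if: "(c::bit) * x = (if c = 1 then x else 0)"
  by (cases c) simp_all

lemma card_Sm: "k \<ge> 1 \<Longrightarrow> card (Sm N (k - 1)) = (\<Sum>i<k. N choose i)"
proof -
  assume k: "k \<ge> 1"
  have eq: "Sm N (k - 1) = (\<Union>i<k. {T. T \<subseteq> {..<N} \<and> card T = i})"
    unfolding Sm_def using k by (auto simp: less_Suc_eq_le[symmetric])
  have "card (\<Union>i<k. {T. T \<subseteq> {..<N} \<and> card T = i}) = (\<Sum>i<k. card {T. T \<subseteq> {..<N} \<and> card T = i})"
  proof (rule card_UN_disjoint)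
    show "finite {..<k}" by simp
    show "\<forall>i\<in>{..<k}. finite {T. T \<subseteq> {..<N} \<and> card T = i}"
    proof
      fix i show "finite {T. T \<subseteq> {..<N} \<and> card T = i}"
        by (rule finite_subset[of _ "Pow {..<N}"]) auto
    qed
    show "\<forall>i\<in>{..<k}. \<forall>j\<in>{..<k}. i \<noteq> j \<longrightarrow> {T. T \<subseteq> {..<N} \<and> card T = i} \<inter> {T. T \<subseteq> {..<N} \<and> card T = j} = {}"
      by blast
  qed
  also have "\<dots> = (\<Sum>i<k. N choose i)"
    by (rule sum.cong[OF refl]) (simp add: n_subsets)
  finally show ?thesis unfolding eq .
qed

lemma count:
  assumes S: "finite S" "S \<subseteq> carrier_vec N"
    and all: "\<And>g. \<exists>f. deg N d f \<and> (\<forall>z\<in>S. g z = f z)"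
  shows "card S \<le> card (Sm N d)"
proof -
  have "\<forall>g. \<exists>c. \<forall>z\<in>S. g z = (\<Sum>T\<in>Sm N d. c T * bmon T z)"
  proof
    fix g :: "bit vec \<Rightarrow> bit"
    obtain f where f: "deg N d f" "\<forall>z\<in>S. g z = f z" using all by blast
    then obtain c where cc: "\<forall>z\<in>carrier_vec N. f z = (\<Sum>T\<in>Sm N d. c T * bmon T z)"
      unfolding deg_def by blast
    show "\<exists>c. \<forall>z\<in>S. g z = (\<Sum>T\<in>Sm N d. c T * bmon T z)"
    proof (intro exI[of _ c] ballI)
      fix z assume z: "z \<in> S"
      then have "z \<in> carrier_vec N" using S(2) by blast
      then show "g z = (\<Sum>T\<in>Sm N d. c T * bmon T z)" using cc f(2) z by simp
    qed
  qed
  from choice[OF this] obtain CC where CC0: "\<forall>g. \<forall>z\<in>S. g z = (\<Sum>T\<in>Sm N d. CC g T * bmon T z)"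
    by blast
  have CC: "g z = (\<Sum>T\<in>Sm N d. CC g T * bmon T z)" if "z \<in> S" for g z
    using CC0 that by blast
  define \<Phi> where "\<Phi> g = {T \<in> Sm N d. CC g T = 1}" for g
  have key: "g z = (\<Sum>T\<in>\<Phi> g. bmon T z)" if "z \<in> S" for g z
  proof -
    have "g z = (\<Sum>T\<in>Sm N d. if CC g T = 1 then bmon T z else 0)"
      unfolding CC[of z g, OF that] by (rule sum.cong[OF refl]) (rule bit_mult_if)
    also have "\<dots> = (\<Sum>T\<in>\<Phi> g. bmon T z)" unfolding \<Phi>_def
      by (rule sum.inter_filter[symmetric]) simp
    finally show ?thesis .
  qed
  have inj: "inj_on \<Phi> (PiE S (\<lambda>_. UNIV))"
  proof
    fix g h assume g: "g \<in> PiE S (\<lambda>_. UNIV)" and h: "h \<in> PiE S (\<lambda>_. UNIV)" and e: "\<Phi> g = \<Phi> h"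
    show "g = h"
    proof
      fix z
      show "g z = h z"
      proof (cases "z \<in> S")
        case True then show ?thesis using key[OF True, of g] key[OF True, of h] e by simp
      next
        case False then show ?thesis using PiE_arb[OF g False] PiE_arb[OF h False] by simp
      qed
    qed
  qed
  have img: "\<Phi> ` PiE S (\<lambda>_. UNIV) \<subseteq> Pow (Sm N d)" unfolding \<Phi>_def by auto
  have "card (PiE S (\<lambda>_. UNIV :: bit set)) \<le> card (Pow (Sm N d))"
    by (rule card_inj_on_le[OF inj img]) simp
  moreover have "card (PiE S (\<lambda>_. UNIV :: bit set)) = 2 ^ card S"
    using S(1) by (simp add: card_PiE card_bit_UNIV)
  moreover have "card (Pow (Sm N d)) = 2 ^ card (Sm N d)" by (simp add: card_Pow)
  ultimately have "(2::nat) ^ card S \<le> 2 ^ card (Sm N d)" by simp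
  then show ?thesis by simp
qed

lemma pick_bij:
  assumes "finite U"
  shows "bij_betw (pick U) {0..<card U} U"
proof -
  have inj: "inj_on (pick U) {0..<card U}"
  proof
    fix i j assume "i \<in> {0..<card U}" "j \<in> {0..<card U}" "pick U i = pick U j"
    then show "i = j" using pick_mono_le[of i U j] pick_mono_le[of j U i]
      by (metis atLeastLessThan_iff linorder_neqE_nat order_less_irrefl)
  qed
  have sub: "pick U ` {0..<card U} \<subseteq> U" using pick_in_set_le by auto
  have "card (pick U ` {0..<card U}) = card U" using card_image[OF inj] by simp
  then have "pick U ` {0..<card U} = U" using card_subset_eq[OF assms sub] by simp
  then show ?thesis using inj unfolding bij_betw_def by simp
qed

context
  fixes N :: nat and A :: "nat \<Rightarrow> bit mat" and C :: "bit mat"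
  assumes A_dim: "\<And>i. i < N \<Longrightarrow> A i \<in> carrier_mat N N"
    and A_sym: "\<And>i. i < N \<Longrightarrow> transpose_mat (A i) = A i"
    and A_diag: "\<And>i j. i < N \<Longrightarrow> j < N \<Longrightarrow> A i $$ (j, j) = (if i = j then 1 else 0)"
    and C_dim: "C \<in> carrier_mat N N"
    and C_sym: "transpose_mat C = C"
begin

lemma M_carrier: "Amat N A z + C \<in> carrier_mat N N"
  using Amat_carrier C_dim by (metis add_carrier_mat)

lemma M_index: "r < N \<Longrightarrow> c < N \<Longrightarrow> (Amat N A z + C) $$ (r, c) = (\<Sum>l<N. z $ l * A l $$ (r, c)) + C $$ (r, c)"
  using C_dim by (simp add: Amat_index)

lemma A_symE: "l < N \<Longrightarrow> r < N \<Longrightarrow> c < N \<Longrightarrow> A l $$ (r, c) = A l $$ (c, r)"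
  using A_sym[of l] A_dim[of l] by (metis carrier_matD(1,2) index_transpose_mat(1))

lemma C_symE: "r < N \<Longrightarrow> c < N \<Longrightarrow> C $$ (r, c) = C $$ (c, r)"
  using C_sym C_dim by (metis carrier_matD(1,2) index_transpose_mat(1))

lemma M_sym: "r < N \<Longrightarrow> c < N \<Longrightarrow> (Amat N A z + C) $$ (r, c) = (Amat N A z + C) $$ (c, r)"
  by (simp add: M_index A_symE C_symE)

lemma M_deg: "r < N \<Longrightarrow> c < N \<Longrightarrow> deg N 1 (\<lambda>z. (Amat N A z + C) $$ (r, c))"
proof -
  assume rc: "r < N" "c < N"
  have "deg N 1 (\<lambda>z. (\<Sum>l<N. z $ l * A l $$ (r, c)) + C $$ (r, c))"
  proof (rule deg_add)
    show "deg N 1 (\<lambda>z. \<Sum>l<N. z $ l * A l $$ (r, c))"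
    proof (rule deg_sum)
      fix l assume "l \<in> {..<N}"
      then show "deg N 1 (\<lambda>z. z $ l * A l $$ (r, c))"
        using deg_mul[OF deg_var deg_const[of N 0]] by simp
    qed simp
  qed (rule deg_const)
  then show ?thesis by (rule deg_cong) (simp add: M_index rc)
qed

lemma M_diag: "r < N \<Longrightarrow> (Amat N A z + C) $$ (r, r) = z $ r + C $$ (r, r)"
proof -
  assume r: "r < N"
  have "(\<Sum>l<N. z $ l * A l $$ (r, r)) = (\<Sum>l<N. if l = r then z $ l else 0)"
    by (rule sum.cong[OF refl]) (simp add: A_diag r)
  also have "\<dots> = z $ r" using r by simp
  finally show ?thesis by (simp add: M_index r)
qed

lemma det_part:
  assumes U: "U \<subseteq> {..<N}" "U \<noteq> {}"
  shows "deg N (card U - 1) (\<lambda>z. det (submatrix (Amat N A z + C) U U) + bmon U z)"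
proof -
  define n where "n = card U"
  have finU: "finite U" using U finite_subset by blast
  have n1: "n \<ge> 1" using U finU unfolding n_def by (simp add: Suc_leI card_gt_0_iff)
  have cU: "{i. i < N \<and> i \<in> U} = U" using U by auto
  have dimM: "dim_row (Amat N A z + C) = N" "dim_col (Amat N A z + C) = N" for z
    using C_dim by auto
  have carr: "submatrix (Amat N A z + C) U U \<in> carrier_mat n n" for z
    unfolding carrier_mat_def using C_dim by (simp add: dim_submatrix cU n_def)
  have pk: "i < n \<Longrightarrow> pick U i < N" for i
    using pick_in_set_le[of i U] U unfolding n_def by auto
  have idx: "i < n \<Longrightarrow> j < n \<Longrightarrow> submatrix (Amat N A z + C) U U $$ (i, j) = (Amat N A z + C) $$ (pick U i, pick U j)" for z i j
    by (rule submatrix_index) (use C_dim in \<open>simp_all add: cU n_def\<close>)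
  have "deg N (n - 1) (\<lambda>z. (\<Sum>p\<in>{p. p permutes {0..<n}}. of_int (sign p) * (\<Prod>i = 0..<n. submatrix (Amat N A z + C) U U $$ (i, p i)))
           + (\<Prod>i = 0..<n. z $ pick U i))"
  proof (rule deg_det_perm[where e = "\<lambda>i. C $$ (pick U i, pick U i)"])
    show "1 \<le> n" by (rule n1)
    show "submatrix (Amat N A z + C) U U $$ (i, j) = submatrix (Amat N A z + C) U U $$ (j, i)"
      if "i < n" "j < n" for z i j using that by (simp add: idx pk M_sym)
    show "deg N 1 (\<lambda>z. submatrix (Amat N A z + C) U U $$ (i, j))" if "i < n" "j < n" for i j
      using M_deg[OF pk pk, OF that] by (elim deg_cong) (simp add: idx that)
    show "pick U i < N" if "i < n" for i using pk that .
    show "submatrix (Amat N A z + C) U U $$ (i, i) = z $ pick U i + C $$ (pick U i, pick U i)"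
      if "i < n" for z i using that by (simp add: idx pk M_diag)
  qed
  then show ?thesis unfolding n_def[symmetric]
  proof (rule deg_cong)
    fix z :: "bit vec"
    have "bmon U z = (\<Prod>i = 0..<n. z $ pick U i)"
      unfolding bmon_def n_def
      using prod.reindex_bij_betw[OF pick_bij[OF finU], of "\<lambda>j. z $ j"] by simp
    then show "(\<Sum>p\<in>{p. p permutes {0..<n}}. of_int (sign p) * (\<Prod>i = 0..<n. submatrix (Amat N A z + C) U U $$ (i, p i)))
           + (\<Prod>i = 0..<n. z $ pick U i) = det (submatrix (Amat N A z + C) U U) + bmon U z"
      by (simp add: det_def'[OF carr])
  qed
qed

lemma det_vanish:
  assumes U: "U \<subseteq> {..<N}" and kU: "card U \<ge> k" and k: "k \<ge> 1"
    and r: "vec_space.rank N (Amat N A z + C) \<le> k - 1"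
  shows "det (submatrix (Amat N A z + C) U U) = 0"
proof (rule ccontr)
  assume "det (submatrix (Amat N A z + C) U U) \<noteq> 0"
  from vec_space.rank_gt_minor[OF M_carrier this]
  have "card {j. j < N \<and> j \<in> U} \<le> vec_space.rank N (Amat N A z + C)" .
  moreover have "{j. j < N \<and> j \<in> U} = U" using U by auto
  ultimately show False using kU k r by simp
qed

end

theorem lemma4p6:
  fixes N k :: nat and A :: "nat \<Rightarrow> bit mat" and C :: "bit mat"
  assumes A_dim: "\<And>i. i < N \<Longrightarrow> A i \<in> carrier_mat N N"
    and A_sym: "\<And>i. i < N \<Longrightarrow> transpose_mat (A i) = A i"
    and A_diag: "\<And>i j. i < N \<Longrightarrow> j < N \<Longrightarrow> A i $$ (j, j) = (if i = j then 1 else 0)"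
    and C_dim: "C \<in> carrier_mat N N"
    and C_sym: "transpose_mat C = C"
    and k: "1 \<le> k" "k \<le> N"
  shows "real (card {z \<in> carrier_vec N. vec_space.rank N (Amat N A z + C) \<le> k - 1}) / 2 ^ N
           \<le> (1 / 2 ^ N) * (\<Sum>i<k. real (N choose i))"
proof -
  define S where "S = {z \<in> carrier_vec N. vec_space.rank N (Amat N A z + C) \<le> k - 1}"
  have cS: "card S \<le> (\<Sum>i<k. N choose i)"
  proof (cases "finite S")
    case False then show ?thesis by simp
  next
    case True
    have Sc: "S \<subseteq> carrier_vec N" unfolding S_def by auto
    have red: "\<exists>h. deg N (card U - 1) h \<and> (\<forall>z\<in>S. bmon U z = h z)"
      if U: "U \<subseteq> {..<N}" "card U \<ge> k" for U
    proof -
      have Une: "U \<noteq> {}" using U k by auto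
      let ?h = "\<lambda>z. det (submatrix (Amat N A z + C) U U) + bmon U z"
      have "deg N (card U - 1) ?h"
        by (rule det_part[OF A_dim A_sym A_diag C_dim C_sym U(1) Une])
      moreover have "\<forall>z\<in>S. bmon U z = ?h z"
      proof
        fix z assume "z \<in> S"
        then have "vec_space.rank N (Amat N A z + C) \<le> k - 1" unfolding S_def by simp
        then have "det (submatrix (Amat N A z + C) U U) = 0"
          using det_vanish[OF A_dim A_sym A_diag C_dim C_sym U(1) U(2) k(1)] by blast
        then show "bmon U z = ?h z" by simp
      qed
      ultimately show ?thesis by blast
    qed
    have all: "\<exists>f. deg N (k - 1) f \<and> (\<forall>z\<in>S. g z = f z)" for g
    proof -
      obtain f where f: "deg N N f" "\<forall>z\<in>S. g z = f z" using deg_all[OF True Sc] by blast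
      obtain f' where f': "deg N (k - 1) f'" "\<forall>z\<in>S. f z = f' z"
        using reduce[OF k(1) Sc red f(1)] by blast
      show ?thesis using f(2) f' by auto
    qed
    show ?thesis using count[OF True Sc all] card_Sm[OF k(1)] by simp
  qed
  then have "real (card S) \<le> real (\<Sum>i<k. N choose i)" by (simp only: of_nat_le_iff)
  then have "real (card S) \<le> (\<Sum>i<k. real (N choose i))" by simp
  then have "real (card S) / 2 ^ N \<le> (\<Sum>i<k. real (N choose i)) / 2 ^ N"
    by (rule divide_right_mono) simp
  then show ?thesis unfolding S_def by simp
qed

end
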